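(* Let $T$ be a tree of order $n\ge 2$ with set of support vertices $S=\{v_1,\dots,v_s\}$, where $v_i$ is adjacent to exactly $\ell_i$ leaves. Then $$\gamma^{0}_{st}(T)\ge -n+2\left(\left\lfloor\frac{\ell_1}{2}\right\rfloor+\cdots+\left\lfloor\frac{\ell_s}{2}\right\rfloor\right).$$ Moreover, equality holds if and only if $T\in\Omega$.
   Context: For a vertex $v$ of a graph $G=(V,E)$, $N(v)$ is its open neighborhood, and for $f:V\to\mathbb{R}$ and $B\subseteq V$ write $f(B)=\sum_{v\in B}f(v)$; $f(V)$ is the weight of $f$. An inverse signed total dominating function (ISTDF) of $G$ is a function $f:V\to\{-1,1\}$ such that $f(N(v))\le 0$ for every $v\in V$. The inverse signed total domination number $\gamma^{0}_{st}(G)$ is the maximum weight of an ISTDF of $G$. For a tree $T$: a leaf is a vertex of degree $1$; a support vertex is a vertex adjacent to at least one leaf; $L=L(T)$ and $S=S(T)$ denote the sets of leaves and of support vertices; for $w\in S$, $L_w$ is the set of leaves adjacent to $w$; $T'$ is the subgraph of $T$ induced by $S$, and $\Delta(T')$ its maximum degree. The family $\Omega$ consists of all trees $T$ such that either $T$ is isomorphic to the path $P_2$, or all of the following hold: (a) $|L_w|\ge 2$ for every support vertex $w$; (b) $\Delta(T')\le 1$; (b1) if $\Delta(T')=1$, then every vertex of $T$ is a leaf or a support vertex (i.e. $V=L\cup S$) and $|L_w|$ is even for every support vertex $w$; (b2) if $\Delta(T')=0$, then either $T$ is isomorphic to the star $K_{1,n-1}$, or each support vertex is adjacent to exactly one vertex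 of $V\setminus(L\cup S)$, every vertex of $V\setminus(L\cup S)$ has at least one neighbor in $S$, and $|L_w|$ is even for every support vertex $w$. *)

theory Defs
  imports Main
begin

definition simple_graph :: "'a set \<Rightarrow> 'a set set \<Rightarrow> bool" where
  "simple_graph V E \<longleftrightarrow> finite V \<and>
     (\<forall>e\<in>E. \<exists>u v. e = {u, v} \<and> u \<noteq> v \<and> u \<in> V \<and> v \<in> V)"

definition nbhd :: "'a set \<Rightarrow> 'a set set \<Rightarrow> 'a \<Rightarrow> 'a set" where
  "nbhd V E v = {u \<in> V. {u, v} \<in> E}"

definition graph_connected :: "'a set \<Rightarrow> 'a set set \<Rightarrow> bool" where
  "graph_connected V E \<longleftrightarrow>
     (\<forall>u\<in>V. \<forall>v\<in>V. (u, v) \<in> {(x, y). {x, y} \<in> E}\<^sup>*)"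

definition is_cycle :: "'a set \<Rightarrow> 'a set set \<Rightarrow> 'a list \<Rightarrow> bool" where
  "is_cycle V E xs \<longleftrightarrow> length xs \<ge> 3 \<and> distinct xs \<and> set xs \<subseteq> V \<and>
     (\<forall>i. Suc i < length xs \<longrightarrow> {xs ! i, xs ! Suc i} \<in> E) \<and>
     {last xs, hd xs} \<in> E"

definition acyclic_graph :: "'a set \<Rightarrow> 'a set set \<Rightarrow> bool" where
  "acyclic_graph V E \<longleftrightarrow> (\<nexists>xs. is_cycle V E xs)"

definition is_tree :: "'a set \<Rightarrow> 'a set set \<Rightarrow> bool" where
  "is_tree V E \<longleftrightarrow> simple_graph V E \<and> V \<noteq> {} \<and> graph_connected V E \<and> acyclic_graph V E"

definition istdf :: "'a set \<Rightarrow> 'a set set \<Rightarrow> ('a \<Rightarrow> int) \<Rightarrow> bool" where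
  "istdf V E f \<longleftrightarrow> (\<forall>v\<in>V. f v \<in> {-1, 1}) \<and>
     (\<forall>v\<in>V. (\<Sum>u\<in>nbhd V E v. f u) \<le> 0)"

definition inv_signed_total_dom_num :: "'a set \<Rightarrow> 'a set set \<Rightarrow> int" where
  "inv_signed_total_dom_num V E = Max {(\<Sum>v\<in>V. f v) | f. istdf V E f}"

definition leaves :: "'a set \<Rightarrow> 'a set set \<Rightarrow> 'a set" where
  "leaves V E = {v \<in> V. card (nbhd V E v) = 1}"

definition supports :: "'a set \<Rightarrow> 'a set set \<Rightarrow> 'a set" where
  "supports V E = {v \<in> V. \<exists>u \<in> leaves V E. u \<in> nbhd V E v}"

definition leaves_at :: "'a set \<Rightarrow> 'a set set \<Rightarrow> 'a \<Rightarrow> 'a set" where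
  "leaves_at V E w = nbhd V E w \<inter> leaves V E"

text \<open>Degree of w in T' = T[S] is card (nbhd w \<inter> S).\<close>

definition deg_support_subgraph :: "'a set \<Rightarrow> 'a set set \<Rightarrow> 'a \<Rightarrow> nat" where
  "deg_support_subgraph V E w = card (nbhd V E w \<inter> supports V E)"

definition isomorphic_P2 :: "'a set \<Rightarrow> 'a set set \<Rightarrow> bool" where
  "isomorphic_P2 V E \<longleftrightarrow> (\<exists>u v. u \<noteq> v \<and> V = {u, v} \<and> E = {{u, v}})"

definition is_star :: "'a set \<Rightarrow> 'a set set \<Rightarrow> bool" where
  "is_star V E \<longleftrightarrow> (\<exists>c\<in>V. E = {{c, v} | v. v \<in> V - {c}})"

definition in_Omega :: "'a set \<Rightarrow> 'a set set \<Rightarrow> bool" where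
  "in_Omega V E \<longleftrightarrow>
     isomorphic_P2 V E \<or>
     ( \<comment> \<open>(a)\<close>
       (\<forall>w\<in>supports V E. card (leaves_at V E w) \<ge> 2) \<and>
       \<comment> \<open>(b) \<Delta>(T') \<le> 1\<close>
       (\<forall>w\<in>supports V E. deg_support_subgraph V E w \<le> 1) \<and>
       \<comment> \<open>(b1) \<Delta>(T') = 1\<close>
       ((\<exists>w\<in>supports V E. deg_support_subgraph V E w = 1) \<longrightarrow>
          V = leaves V E \<union> supports V E \<and>
          (\<forall>w\<in>supports V E. even (card (leaves_at V E w)))) \<and>
       \<comment> \<open>(b2) \<Delta>(T') = 0\<close>
       ((\<forall>w\<in>supports V E. deg_support_subgraph V E w = 0) \<longrightarrow>
          is_star V E \<or>
          ((\<forall>w\<in>supports V E. card (nbhd V E w - (leaves V E \<union> supports V E)) = 1) \<and>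
           (\<forall>x\<in>V - (leaves V E \<union> supports V E). \<exists>w\<in>supports V E. w \<in> nbhd V E x) \<and>
           (\<forall>w\<in>supports V E. even (card (leaves_at V E w))))))"

end

theory Submission imports Defs begin

definition valid :: "'a set \<Rightarrow> 'a set set \<Rightarrow> 'a set \<Rightarrow> bool" where
  "valid V E P \<longleftrightarrow> P \<subseteq> V \<and> (\<forall>v\<in>V. 2 * card (nbhd V E v \<inter> P) \<le> card (nbhd V E v))"

lemma sum_pm:
  assumes "finite A" "\<forall>x\<in>A. f x \<in> {-1, 1::int}"
  shows "(\<Sum>x\<in>A. f x) = 2 * int (card {x\<in>A. f x = 1}) - int (card A)"
  using assms
proof (induction A rule: finite_induct)
  case empty then show ?case by simp
next
  case (insert a A)
  have fin: "finite {x\<in>A. f x = 1}" using insert by simp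
  show ?case
  proof (cases "f a = 1")
    case True
    have "{x\<in>insert a A. f x = 1} = insert a {x\<in>A. f x = 1}" using True by auto
    moreover have "a \<notin> {x\<in>A. f x = 1}" using insert by auto
    ultimately show ?thesis using insert True fin by simp
  next
    case False
    then have "f a = -1" using insert by auto
    moreover have "{x\<in>insert a A. f x = 1} = {x\<in>A. f x = 1}" using False by auto
    ultimately show ?thesis using insert by simp
  qed
qed

lemma card_ge1: "finite A \<Longrightarrow> x \<in> A \<Longrightarrow> 1 \<le> card A"
proof -
  assume "finite A" "x \<in> A"
  then have "card A \<noteq> 0" by auto
  then show ?thesis by simp
qed

locale sgraph =
  fixes V :: "'a set" and E :: "'a set set"
  assumes sg: "simple_graph V E"
begin

abbreviation "N \<equiv> nbhd V E"
abbreviation "L \<equiv> leaves V E"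
abbreviation "S \<equiv> supports V E"
abbreviation "LA \<equiv> leaves_at V E"

lemma finV: "finite V" using sg unfolding simple_graph_def by blast

lemma edge: "e \<in> E \<Longrightarrow> \<exists>u v. e = {u, v} \<and> u \<noteq> v \<and> u \<in> V \<and> v \<in> V"
  using sg unfolding simple_graph_def by blast

lemma nb_sub: "N v \<subseteq> V" unfolding nbhd_def by auto

lemma fin_nb: "finite (N v)" using nb_sub finV finite_subset by blast

lemma nb_sym: "u \<in> N v \<Longrightarrow> v \<in> V \<Longrightarrow> v \<in> N u"
  unfolding nbhd_def by (auto simp: insert_commute)

lemma nb_irr: "u \<in> N v \<Longrightarrow> u \<noteq> v"
proof
  assume "u \<in> N v" "u = v"
  then have "{v} \<in> E" unfolding nbhd_def by auto
  then obtain a b where ab: "{v} = {a, b}" "a \<noteq> b" using edge by blast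
  then have "a = v" "b = v" by blast+
  then show False using ab by simp
qed

lemma leaf_ex: "u \<in> L \<Longrightarrow> \<exists>w. N u = {w}"
  unfolding leaves_def using card_1_singleton_iff by auto

lemma leaf_nb: "u \<in> L \<Longrightarrow> w \<in> N u \<Longrightarrow> N u = {w}"
proof -
  assume "u \<in> L" "w \<in> N u"
  then obtain x where "N u = {x}" using leaf_ex by blast
  then show ?thesis using \<open>w \<in> N u\<close> by simp
qed

lemma leafV: "u \<in> L \<Longrightarrow> u \<in> V" unfolding leaves_def by auto

lemma LA_sub: "LA w \<subseteq> N w" unfolding leaves_at_def by auto
lemma LA_subL: "LA w \<subseteq> L" unfolding leaves_at_def by auto
lemma fin_LA: "finite (LA w)" using LA_sub fin_nb finite_subset by blast

lemma sup_iff: "w \<in> S \<longleftrightarrow> w \<in> V \<and> LA w \<noteq> {}"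
  unfolding supports_def leaves_at_def by auto

lemma LA_nb: "u \<in> LA w \<Longrightarrow> w \<in> V \<Longrightarrow> N u = {w}"
  using LA_sub LA_subL nb_sym leaf_nb by blast

lemma LA_disj: "w \<in> V \<Longrightarrow> w' \<in> V \<Longrightarrow> w \<noteq> w' \<Longrightarrow> LA w \<inter> LA w' = {}"
  using LA_nb by blast

lemma card_split: "card (N w) = card (LA w) + card (N w - L)"
  unfolding leaves_at_def using card_Int_Diff fin_nb by blast

lemma leaf_sup: "u \<in> L \<Longrightarrow> N u = {w} \<Longrightarrow> w \<in> S"
  unfolding supports_def using nb_sym leafV nb_sub by fastforce

lemma valid_istdf:
  assumes "valid V E P"
  shows "istdf V E (\<lambda>v. if v \<in> P then 1 else -1)"
    and "(\<Sum>v\<in>V. (if v \<in> P then 1 else -1::int)) = 2 * int (card P) - int (card V)"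
proof -
  have PV: "P \<subseteq> V" using assms unfolding valid_def by blast
  have gen: "(\<Sum>v\<in>A. (if v \<in> P then 1 else -1::int)) = 2 * int (card (A \<inter> P)) - int (card A)"
    if fA: "finite A" for A :: "'a set"
  proof -
    have eq: "{x\<in>A. (if x \<in> P then 1 else -1::int) = 1} = A \<inter> P" by auto
    have pm: "\<forall>x\<in>A. (if x \<in> P then 1 else -1::int) \<in> {-1, 1}" by simp
    show ?thesis using sum_pm[OF fA pm] unfolding eq .
  qed
  have "\<forall>v\<in>V. (\<Sum>u\<in>N v. (if u \<in> P then 1 else -1::int)) \<le> 0"
  proof
    fix v assume v: "v \<in> V"
    have "2 * card (N v \<inter> P) \<le> card (N v)" using assms v unfolding valid_def by blast
    then have "2 * int (card (N v \<inter> P)) \<le> int (card (N v))" by linarith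
    then show "(\<Sum>u\<in>N v. (if u \<in> P then 1 else -1::int)) \<le> 0" using gen[OF fin_nb[of v]] by linarith
  qed
  then show "istdf V E (\<lambda>v. if v \<in> P then 1 else -1)"
    unfolding istdf_def by simp
  have "V \<inter> P = P" using PV by blast
  then show "(\<Sum>v\<in>V. (if v \<in> P then 1 else -1::int)) = 2 * int (card P) - int (card V)"
    using gen[OF finV] by simp
qed

lemma istdf_valid:
  assumes "istdf V E f"
  shows "valid V E {v\<in>V. f v = 1}" and "(\<Sum>v\<in>V. f v) = 2 * int (card {v\<in>V. f v = 1}) - int (card V)"
proof -
  have pm: "\<forall>x\<in>V. f x \<in> {-1,1}" using assms unfolding istdf_def by blast
  show "(\<Sum>v\<in>V. f v) = 2 * int (card {v\<in>V. f v = 1}) - int (card V)"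
    using sum_pm[OF finV pm] .
  have "\<forall>v\<in>V. 2 * card (N v \<inter> {v\<in>V. f v = 1}) \<le> card (N v)"
  proof
    fix v assume v: "v \<in> V"
    have pm': "\<forall>x\<in>N v. f x \<in> {-1,1}" using pm nb_sub by blast
    have eq: "{x\<in>N v. f x = 1} = N v \<inter> {v\<in>V. f v = 1}" using nb_sub by blast
    have "(\<Sum>x\<in>N v. f x) = 2 * int (card (N v \<inter> {v\<in>V. f v = 1})) - int (card (N v))"
      using sum_pm[OF fin_nb pm'] unfolding eq .
    moreover have "(\<Sum>x\<in>N v. f x) \<le> 0" using assms v unfolding istdf_def by blast
    ultimately show "2 * card (N v \<inter> {v\<in>V. f v = 1}) \<le> card (N v)" by linarith
  qed
  then show "valid V E {v\<in>V. f v = 1}" unfolding valid_def by blast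
qed

lemma gamma_ge: "valid V E P \<Longrightarrow> 2 * int (card P) - int (card V) \<le> inv_signed_total_dom_num V E"
  and gamma_ex: "\<exists>P. valid V E P \<and> inv_signed_total_dom_num V E = 2 * int (card P) - int (card V)"
proof -
  let ?W = "{(\<Sum>v\<in>V. f v) | f. istdf V E f}"
  have sub: "?W \<subseteq> (\<lambda>k. 2 * int k - int (card V)) ` {..card V}"
  proof
    fix x assume "x \<in> ?W"
    then obtain f where f: "istdf V E f" "x = (\<Sum>v\<in>V. f v)" by blast
    let ?k = "card {v\<in>V. f v = 1}"
    have k: "?k \<in> {..card V}" using finV by (simp add: card_mono)
    have "x = 2 * int ?k - int (card V)" using istdf_valid(2)[OF f(1)] f(2) by simp
    then show "x \<in> (\<lambda>k. 2 * int k - int (card V)) ` {..card V}" using k by blast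
  qed
  have finW: "finite ?W" using finite_subset[OF sub] by blast
  have mem: "2 * int (card P) - int (card V) \<in> ?W" if vP: "valid V E P" for P
  proof -
    note h = valid_istdf[OF vP]
    show ?thesis unfolding mem_Collect_eq
      by (rule exI[where x="\<lambda>v. if v \<in> P then 1 else -1"]) (simp add: h)
  qed
  have v0: "valid V E {}" unfolding valid_def by simp
  have ne: "?W \<noteq> {}" using mem[OF v0] by blast
  show "valid V E P \<Longrightarrow> 2 * int (card P) - int (card V) \<le> inv_signed_total_dom_num V E"
    unfolding inv_signed_total_dom_num_def using finW mem by (intro Max_ge) 
  have "Max ?W \<in> ?W" using finW ne by (rule Max_in)
  then obtain f where f: "istdf V E f" "Max ?W = (\<Sum>v\<in>V. f v)" by blast
  show "\<exists>P. valid V E P \<and> inv_signed_total_dom_num V E = 2 * int (card P) - int (card V)"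
    apply (rule exI[of _ "{v\<in>V. f v = 1}"])
    using istdf_valid[OF f(1)] f(2) unfolding inv_signed_total_dom_num_def by simp
qed

lemma S_sub: "S \<subseteq> V" unfolding supports_def by blast
lemma finS: "finite S" using S_sub finV finite_subset by blast

definition M where "M = (\<Sum>w\<in>S. card (LA w) div 2)"

lemma P0_ex: "\<exists>P0. valid V E P0 \<and> card P0 = M \<and> P0 \<subseteq> L \<and>
   (\<forall>v\<in>V. v \<notin> S \<longrightarrow> N v \<inter> P0 = {}) \<and>
   (\<forall>w\<in>S. card (N w \<inter> P0) = card (LA w) div 2 \<and> N w \<inter> P0 \<subseteq> LA w)"
proof -
  have "\<forall>w. \<exists>A. A \<subseteq> LA w \<and> card A = card (LA w) div 2"
  proof
    fix w
    have "card (LA w) div 2 \<le> card (LA w)" by simp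
    then obtain A where "A \<subseteq> LA w" "card A = card (LA w) div 2" by (rule obtain_subset_with_card_n)
    then show "\<exists>A. A \<subseteq> LA w \<and> card A = card (LA w) div 2" by blast
  qed
  then obtain A where A: "\<And>w. A w \<subseteq> LA w" "\<And>w. card (A w) = card (LA w) div 2" by metis
  define P0 where "P0 = \<Union> (A ` S)"
  have key: "N v \<inter> P0 = (if v \<in> S then A v else {})" if v: "v \<in> V" for v
  proof
    show "N v \<inter> P0 \<subseteq> (if v \<in> S then A v else {})"
    proof
      fix u assume u: "u \<in> N v \<inter> P0"
      then obtain w where w: "w \<in> S" "u \<in> A w" unfolding P0_def by blast
      have "N u = {w}" using LA_nb A(1) w S_sub by blast
      moreover have "v \<in> N u" using nb_sym u v by blast
      ultimately have "v = w" by blast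
      then show "u \<in> (if v \<in> S then A v else {})" using w by simp
    qed
    show "(if v \<in> S then A v else {}) \<subseteq> N v \<inter> P0"
      using A(1) LA_sub unfolding P0_def by auto
  qed
  have fin: "finite (A w)" for w using A(1) fin_LA finite_subset by blast
  have disj: "\<forall>i\<in>S. \<forall>j\<in>S. i \<noteq> j \<longrightarrow> A i \<inter> A j = {}"
    using LA_disj A(1) S_sub by blast
  have cardP: "card P0 = M" unfolding P0_def M_def
    using card_UN_disjoint[OF finS _ disj] fin A(2) by simp
  have PL: "P0 \<subseteq> L" unfolding P0_def using A(1) LA_subL by blast
  have "\<forall>v\<in>V. 2 * card (N v \<inter> P0) \<le> card (N v)"
  proof
    fix v assume v: "v \<in> V"
    show "2 * card (N v \<inter> P0) \<le> card (N v)"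
    proof (cases "v \<in> S")
      case True
      have "card (LA v) \<le> card (N v)" using card_mono[OF fin_nb LA_sub] .
      then show ?thesis using key[OF v] True A(2)[of v] by simp
    next
      case False then show ?thesis using key[OF v] by simp
    qed
  qed
  then have "valid V E P0" unfolding valid_def using PL leafV by blast
  moreover have "\<forall>w\<in>S. card (N w \<inter> P0) = card (LA w) div 2 \<and> N w \<inter> P0 \<subseteq> LA w"
  proof
    fix w assume w: "w \<in> S"
    then have "w \<in> V" using S_sub by blast
    then have "N w \<inter> P0 = A w" using key[of w] w by simp
    then show "card (N w \<inter> P0) = card (LA w) div 2 \<and> N w \<inter> P0 \<subseteq> LA w" using A by simp
  qed
  moreover have "\<forall>v\<in>V. v \<notin> S \<longrightarrow> N v \<inter> P0 = {}" using key by simp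
  ultimately show ?thesis using cardP PL by blast
qed

lemma lower: "2 * int M - int (card V) \<le> inv_signed_total_dom_num V E"
  using P0_ex gamma_ge by metis

lemma notP_S: "valid V E P \<Longrightarrow> w \<in> S \<Longrightarrow> w \<notin> P"
proof
  assume vP: "valid V E P" and w: "w \<in> S" and wP: "w \<in> P"
  then obtain u where u: "u \<in> L" "u \<in> N w" unfolding supports_def by blast
  have "N u = {w}" using leaf_nb nb_sym u S_sub w by blast
  moreover have "u \<in> V" using leafV u by blast
  ultimately have "2 * card ({w} \<inter> P) \<le> card {w}" using vP unfolding valid_def by metis
  then show False using wP by simp
qed

lemma up_cover:
  assumes vP: "valid V E P" and cov: "P \<subseteq> (\<Union>w\<in>S. N w)"
    and bd: "\<forall>w\<in>S. card (N w) \<le> card (LA w) + 1 \<and> even (card (LA w))"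
  shows "card P \<le> M"
proof -
  have "P = (\<Union>w\<in>S. N w \<inter> P)" using cov by blast
  then have "card P \<le> (\<Sum>w\<in>S. card (N w \<inter> P))" using card_UN_le[OF finS, of "\<lambda>w. N w \<inter> P"] by simp
  also have "\<dots> \<le> (\<Sum>w\<in>S. card (LA w) div 2)"
  proof (rule sum_mono)
    fix w assume w: "w \<in> S"
    then have "w \<in> V" using S_sub by blast
    then have "2 * card (N w \<inter> P) \<le> card (N w)" using vP unfolding valid_def by blast
    moreover have "card (N w) \<le> card (LA w) + 1" "even (card (LA w))" using bd w by auto
    ultimately show "card (N w \<inter> P) \<le> card (LA w) div 2" by (auto elim!: evenE)
  qed
  finally show ?thesis unfolding M_def .
qed

lemma up_P2:
  assumes "isomorphic_P2 V E" "valid V E P"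
  shows "card P \<le> M"
proof -
  obtain u v where uv: "u \<noteq> v" "V = {u, v}" "E = {{u, v}}" using assms(1) unfolding isomorphic_P2_def by blast
  have Nu: "N u = {v}" using uv unfolding nbhd_def by (auto simp: doubleton_eq_iff)
  have Nv: "N v = {u}" using uv unfolding nbhd_def by (auto simp: doubleton_eq_iff)
  have "u \<in> L" "v \<in> L" using Nu Nv uv unfolding leaves_def by auto
  then have "u \<in> S" "v \<in> S" using Nu Nv uv unfolding supports_def by auto
  then have "P = {}" using notP_S[OF assms(2)] assms(2) uv unfolding valid_def by blast
  then show ?thesis by simp
qed

lemma up_star:
  assumes two: "card V \<ge> 2" and st: "is_star V E" and vP: "valid V E P"
  shows "card P \<le> M"
proof -
  obtain c where c: "c \<in> V" "E = {{c, v} | v. v \<in> V - {c}}" using st unfolding is_star_def by blast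
  have Nv: "N v = {c}" if v: "v \<in> V" "v \<noteq> c" for v
    using c v unfolding nbhd_def by (auto simp: doubleton_eq_iff)
  have Nc: "N c = V - {c}"
    using c unfolding nbhd_def by (auto simp: doubleton_eq_iff)
  have VL: "V - {c} \<subseteq> L" using Nv unfolding leaves_def by auto
  have "V - {c} \<noteq> {}"
  proof
    assume "V - {c} = {}"
    then have "V = {c}" using c by blast
    then show False using two by simp
  qed
  then obtain v where v: "v \<in> V" "v \<noteq> c" by blast
  have cS: "c \<in> S" using leaf_sup[OF _ Nv[OF v]] VL v by blast
  have PN: "P \<subseteq> N c" using notP_S[OF vP cS] vP Nc unfolding valid_def by blast
  have LAc: "LA c = N c" using Nc VL unfolding leaves_at_def by blast
  have "2 * card (N c \<inter> P) \<le> card (N c)" using vP c unfolding valid_def by blast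
  moreover have "N c \<inter> P = P" using PN by blast
  ultimately have "card P \<le> card (LA c) div 2" using LAc by simp
  also have "\<dots> \<le> M" unfolding M_def using member_le_sum[OF cS, of "\<lambda>w. card (LA w) div 2"] finS by simp
  finally show ?thesis .
qed

lemma up:
  assumes two: "card V \<ge> 2" and om: "in_Omega V E" and vP: "valid V E P"
  shows "card P \<le> M"
proof (cases "isomorphic_P2 V E")
  case True then show ?thesis using up_P2 vP by blast
next
  case False
  then have b: "\<forall>w\<in>S. deg_support_subgraph V E w \<le> 1"
    and b1: "(\<exists>w\<in>S. deg_support_subgraph V E w = 1) \<longrightarrow>
          V = L \<union> S \<and> (\<forall>w\<in>S. even (card (LA w)))"
    and b2: "(\<forall>w\<in>S. deg_support_subgraph V E w = 0) \<longrightarrow>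
          is_star V E \<or>
          ((\<forall>w\<in>S. card (N w - (L \<union> S)) = 1) \<and>
           (\<forall>x\<in>V - (L \<union> S). \<exists>w\<in>S. w \<in> N x) \<and>
           (\<forall>w\<in>S. even (card (LA w))))"
    using om unfolding in_Omega_def by blast+
  have PV: "P \<subseteq> V" using vP unfolding valid_def by blast
  have leafcov: "x \<in> (\<Union>w\<in>S. N w)" if x: "x \<in> L" for x
  proof -
    obtain w where w: "N x = {w}" using leaf_ex x by blast
    have "w \<in> S" using leaf_sup x w by blast
    moreover have "x \<in> N w" using nb_sym[of w x] w leafV x by blast
    ultimately show ?thesis by blast
  qed
  show ?thesis
  proof (cases "\<exists>w\<in>S. deg_support_subgraph V E w = 1")
    case True
    then have VLS: "V = L \<union> S" and ev: "\<forall>w\<in>S. even (card (LA w))" using b1 by blast+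
    have cov: "P \<subseteq> (\<Union>w\<in>S. N w)"
    proof
      fix x assume "x \<in> P"
      then have "x \<in> L" using PV VLS notP_S[OF vP] by blast
      then show "x \<in> (\<Union>w\<in>S. N w)" using leafcov by blast
    qed
    have "\<forall>w\<in>S. card (N w) \<le> card (LA w) + 1 \<and> even (card (LA w))"
    proof
      fix w assume w: "w \<in> S"
      have "N w - L \<subseteq> N w \<inter> S" using nb_sub VLS by blast
      then have "card (N w - L) \<le> card (N w \<inter> S)" using fin_nb by (intro card_mono) auto
      also have "\<dots> \<le> 1" using b w unfolding deg_support_subgraph_def by blast
      finally show "card (N w) \<le> card (LA w) + 1 \<and> even (card (LA w))"
        using card_split[of w] ev w by simp
    qed
    then show ?thesis using up_cover[OF vP cov] by blast
  next
    case False
    then have all0: "\<forall>w\<in>S. deg_support_subgraph V E w = 0" using b by force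
    then have "is_star V E \<or>
          ((\<forall>w\<in>S. card (N w - (L \<union> S)) = 1) \<and>
           (\<forall>x\<in>V - (L \<union> S). \<exists>w\<in>S. w \<in> N x) \<and>
           (\<forall>w\<in>S. even (card (LA w))))" using b2 by blast
    then show ?thesis
    proof
      assume "is_star V E" then show ?thesis using up_star two vP by blast
    next
      assume h: "(\<forall>w\<in>S. card (N w - (L \<union> S)) = 1) \<and>
           (\<forall>x\<in>V - (L \<union> S). \<exists>w\<in>S. w \<in> N x) \<and>
           (\<forall>w\<in>S. even (card (LA w)))"
      have cov: "P \<subseteq> (\<Union>w\<in>S. N w)"
      proof
        fix x assume xP: "x \<in> P"
        show "x \<in> (\<Union>w\<in>S. N w)"
        proof (cases "x \<in> L")
          case True then show ?thesis using leafcov by blast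
        next
          case False
          then have "x \<in> V - (L \<union> S)" using xP PV notP_S[OF vP] by blast
          then obtain w where w: "w \<in> S" "w \<in> N x" using h by blast
          then have "x \<in> N w" using nb_sym[of w x] xP PV by blast
          then show ?thesis using w by blast
        qed
      qed
      have "\<forall>w\<in>S. card (N w) \<le> card (LA w) + 1 \<and> even (card (LA w))"
      proof
        fix w assume w: "w \<in> S"
        have "card (N w \<inter> S) = 0" using all0 w unfolding deg_support_subgraph_def by blast
        then have "N w \<inter> S = {}" using fin_nb by simp
        then have "N w - L = N w - (L \<union> S)" by blast
        then have "card (N w - L) = 1" using h w by simp
        then show "card (N w) \<le> card (LA w) + 1 \<and> even (card (LA w))"
          using card_split[of w] h w by simp
      qed
      then show ?thesis using up_cover[OF vP cov] by blast
    qed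
  qed
qed

end

locale ctree = sgraph +
  assumes conn: "graph_connected V E"
begin

lemma closure:
  assumes CV: "C \<subseteq> V" and c: "c \<in> C" and cl: "\<forall>x\<in>C. N x \<subseteq> C"
  shows "V \<subseteq> C"
proof
  fix v assume v: "v \<in> V"
  have "(c, v) \<in> {(x, y). {x, y} \<in> E}\<^sup>*" using conn c CV v unfolding graph_connected_def by blast
  then show "v \<in> C"
  proof (induction rule: rtrancl_induct)
    case base then show ?case using c .
  next
    case (step y z)
    then have e: "{y, z} \<in> E" by simp
    then obtain a b where "{y, z} = {a, b}" "a \<in> V" "b \<in> V" using edge by blast
    then have "z \<in> V" by (auto simp: doubleton_eq_iff)
    then have "z \<in> N y" using e unfolding nbhd_def by (simp add: insert_commute)
    then show ?case using cl step by blast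
  qed
qed

lemma down:
  assumes hmax: "\<forall>P. valid V E P \<longrightarrow> card P \<le> M"
  shows "in_Omega V E"
proof (cases "isomorphic_P2 V E")
  case True then show ?thesis unfolding in_Omega_def by blast
next
  case nP2: False
  have F1: "w \<notin> L" if u: "u \<in> L" "w \<in> N u" for u w
  proof
    assume wL: "w \<in> L"
    have Nu: "N u = {w}" using leaf_nb u by blast
    have uV: "u \<in> V" using leafV u by blast
    have wV: "w \<in> V" using nb_sub u by blast
    have uNw: "u \<in> N w" using nb_sym u uV by blast
    have Nw: "N w = {u}" using leaf_nb wL uNw by blast
    have uw: "u \<noteq> w" using nb_irr uNw by blast
    have "V \<subseteq> {u, w}" using closure[of "{u, w}" u] Nu Nw uV wV by blast
    then have VV: "V = {u, w}" using uV wV by blast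
    have "E = {{u, w}}"
    proof
      show "E \<subseteq> {{u, w}}"
      proof
        fix e assume "e \<in> E"
        then obtain a b where "e = {a, b}" "a \<noteq> b" "a \<in> V" "b \<in> V" using edge by blast
        then show "e \<in> {{u, w}}" using VV by (auto simp: insert_commute)
      qed
      have "{w, u} \<in> E" using u unfolding nbhd_def by blast
      then show "{{u, w}} \<subseteq> E" by (simp add: insert_commute)
    qed
    then have "isomorphic_P2 V E" unfolding isomorphic_P2_def using VV uw by blast
    then show False using nP2 by blast
  qed
  have LS: "x \<notin> S" if x: "x \<in> L" for x
  proof
    assume "x \<in> S"
    then obtain u where u: "u \<in> L" "u \<in> N x" unfolding supports_def by blast
    have "x \<in> N u" using nb_sym u leafV x by blast
    then show False using F1 u x by blast
  qed
  obtain P0 where P0: "valid V E P0" "card P0 = M" "P0 \<subseteq> L"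
     "\<forall>v\<in>V. v \<notin> S \<longrightarrow> N v \<inter> P0 = {}"
     "\<forall>w\<in>S. card (N w \<inter> P0) = card (LA w) div 2 \<and> N w \<inter> P0 \<subseteq> LA w"
    using P0_ex by blast
  have cardLA: "card (LA w) \<ge> 1" if w: "w \<in> S" for w
    using w fin_LA sup_iff by (simp add: Suc_le_eq card_gt_0_iff)
  have F2: "card (N w) \<le> 2 * (card (LA w) div 2) + 1" if w: "w \<in> S" for w
  proof (rule ccontr)
    assume big: "\<not> card (N w) \<le> 2 * (card (LA w) div 2) + 1"
    have wV: "w \<in> V" using w S_sub by blast
    have c1: "card (N w \<inter> P0) < card (LA w)" using P0(5) w cardLA[OF w] by simp
    have "\<not> LA w \<subseteq> N w \<inter> P0"
    proof
      assume "LA w \<subseteq> N w \<inter> P0"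
      then have "card (LA w) \<le> card (N w \<inter> P0)" using fin_nb by (intro card_mono) auto
      then show False using c1 by simp
    qed
    then obtain z where z: "z \<in> LA w" "z \<notin> N w \<inter> P0" by blast
    have zN: "z \<in> N w" using z LA_sub by blast
    then have zP: "z \<notin> P0" using z by blast
    have Nz: "N z = {w}" using LA_nb z wV by blast
    have zV: "z \<in> V" using zN nb_sub by blast
    let ?P1 = "insert z P0"
    have "valid V E ?P1"
      unfolding valid_def
    proof (intro conjI ballI)
      show "?P1 \<subseteq> V" using zV P0(1) unfolding valid_def by blast
    next
      fix v assume v: "v \<in> V"
      show "2 * card (N v \<inter> ?P1) \<le> card (N v)"
      proof (cases "v = w")
        case True
        have "N w \<inter> ?P1 = insert z (N w \<inter> P0)" using zN by blast
        then have "card (N w \<inter> ?P1) = card (LA w) div 2 + 1"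
          using P0(5) w zP fin_nb by simp
        then show ?thesis using True big by simp
      next
        case False
        have "z \<notin> N v" using Nz nb_sym v False by blast
        then have "N v \<inter> ?P1 = N v \<inter> P0" by blast
        then show ?thesis using P0(1) v unfolding valid_def by simp
      qed
    qed
    moreover have "card ?P1 = M + 1"
    proof -
      have "finite P0" using finV P0(1) finite_subset unfolding valid_def by blast
      then show ?thesis using card_insert_disjoint zP P0(2) by simp
    qed
    ultimately show False using hmax using hmax[rule_format, of ?P1] by simp
  qed
  have dle: "card (N w - L) \<le> 1" and dev: "card (N w - L) = 1 \<Longrightarrow> even (card (LA w))"
    if w: "w \<in> S" for w
    using F2[OF w] card_split[of w] by (cases "even (card (LA w))"; auto elim!: evenE oddE)+
  have G: "N w \<subseteq> L \<and> V = insert w (N w)" if w: "w \<in> S" and d0: "card (N w - L) = 0" for w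
  proof -
    have wV: "w \<in> V" using w S_sub by blast
    have NL: "N w \<subseteq> L" using d0 fin_nb by simp
    have "\<forall>x\<in>insert w (N w). N x \<subseteq> insert w (N w)"
    proof
      fix x assume x: "x \<in> insert w (N w)"
      show "N x \<subseteq> insert w (N w)"
      proof (cases "x = w")
        case True then show ?thesis by blast
      next
        case False
        then have "x \<in> N w" using x by blast
        then have "N x = {w}" using leaf_nb NL nb_sym wV by blast
        then show ?thesis by blast
      qed
    qed
    then have "V \<subseteq> insert w (N w)" using closure[of "insert w (N w)" w] wV nb_sub by blast
    then show ?thesis using NL wV nb_sub by blast
  qed
  have a: "\<forall>w\<in>S. card (LA w) \<ge> 2"
  proof
    fix w assume w: "w \<in> S"
    show "card (LA w) \<ge> 2"
    proof (rule ccontr)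
      assume "\<not> card (LA w) \<ge> 2"
      then have l1: "card (LA w) = 1" using cardLA[OF w] by simp
      have "card (N w - L) \<noteq> 1" using dev[OF w] l1 by auto
      then have d0: "card (N w - L) = 0" using dle[OF w] by simp
      then have "card (N w) = 1" using card_split[of w] l1 by simp
      then have "w \<in> L" using w S_sub unfolding leaves_def by blast
      then show False using LS w by blast
    qed
  qed
  have b: "\<forall>w\<in>S. deg_support_subgraph V E w \<le> 1"
  proof
    fix w assume w: "w \<in> S"
    have "N w \<inter> S \<subseteq> N w - L" using LS by blast
    then have "card (N w \<inter> S) \<le> card (N w - L)" using fin_nb by (intro card_mono) auto
    then show "deg_support_subgraph V E w \<le> 1" using dle[OF w] unfolding deg_support_subgraph_def by simp
  qed
  have b1: "(\<exists>w\<in>S. deg_support_subgraph V E w = 1) \<longrightarrow>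
          V = L \<union> S \<and> (\<forall>w\<in>S. even (card (LA w)))"
  proof
    assume "\<exists>w\<in>S. deg_support_subgraph V E w = 1"
    then obtain w where w: "w \<in> S" "card (N w \<inter> S) = 1" unfolding deg_support_subgraph_def by blast
    obtain y where "N w \<inter> S = {y}" using w(2) by (rule card_1_singletonE)
    then obtain w' where w': "w' \<in> N w" "w' \<in> S" by blast
    have wV: "w \<in> V" and w'V: "w' \<in> V" using w w' S_sub by blast+
    have w'L: "w' \<notin> L" and wL: "w \<notin> L" using LS w w' by blast+
    have ww': "w \<noteq> w'" using nb_irr w' by blast
    have "card (N w - L) \<ge> 1" using w' w'L fin_nb[of w] by (intro card_ge1[of _ w']) auto
    then have "card (N w - L) = 1" using dle[OF w(1)] by simp
    then obtain y1 where "N w - L = {y1}" by (rule card_1_singletonE)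
    moreover have "w' \<in> N w - L" using w' w'L by blast
    ultimately have D1: "N w - L = {w'}" by auto
    have "w \<in> N w'" using nb_sym w' wV by blast
    then have "card (N w' - L) \<ge> 1" using wL fin_nb[of w'] by (intro card_ge1[of _ w]) auto
    then have "card (N w' - L) = 1" using dle[OF w'(2)] by simp
    then obtain y2 where "N w' - L = {y2}" by (rule card_1_singletonE)
    moreover have "w \<in> N w' - L" using \<open>w \<in> N w'\<close> wL by blast
    ultimately have D2: "N w' - L = {w}" by auto
    let ?C = "{w, w'} \<union> LA w \<union> LA w'"
    have CV: "?C \<subseteq> V" using wV w'V LA_sub nb_sub by blast
    have NwC: "N w \<subseteq> ?C" using D1 unfolding leaves_at_def by blast
    have Nw'C: "N w' \<subseteq> ?C" using D2 unfolding leaves_at_def by blast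
    have "\<forall>x\<in>?C. N x \<subseteq> ?C"
    proof
      fix x assume x: "x \<in> ?C"
      show "N x \<subseteq> ?C"
      proof -
        { assume "x = w" then have ?thesis using NwC by blast }
        moreover { assume "x = w'" then have ?thesis using Nw'C by blast }
        moreover { assume "x \<in> LA w" then have ?thesis using LA_nb wV by blast }
        moreover { assume "x \<in> LA w'" then have ?thesis using LA_nb w'V by blast }
        ultimately show ?thesis using x by blast
      qed
    qed
    then have "V \<subseteq> ?C" using closure[OF CV] by blast
    then have "V \<subseteq> L \<union> S" using w w' LA_subL by blast
    then have VLS: "V = L \<union> S" using leafV S_sub by blast
    have "\<forall>v\<in>S. even (card (LA v))"
    proof
      fix v assume v: "v \<in> S"
      show "even (card (LA v))"
      proof (cases "card (N v - L) = 0")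
        case True
        then have GG: "V = insert v (N v)" "N v \<subseteq> L" using G v by blast+
        have "w \<noteq> v \<or> w' \<noteq> v" using ww' by blast
        then show ?thesis using GG wV w'V wL w'L by blast
      next
        case False
        then show ?thesis using dle[OF v] dev[OF v] by simp
      qed
    qed
    then show "V = L \<union> S \<and> (\<forall>w\<in>S. even (card (LA w)))" using VLS by blast
  qed
  have b2: "(\<forall>w\<in>S. deg_support_subgraph V E w = 0) \<longrightarrow>
          is_star V E \<or>
          ((\<forall>w\<in>S. card (N w - (L \<union> S)) = 1) \<and>
           (\<forall>x\<in>V - (L \<union> S). \<exists>w\<in>S. w \<in> N x) \<and>
           (\<forall>w\<in>S. even (card (LA w))))"
  proof
    assume all0: "\<forall>w\<in>S. deg_support_subgraph V E w = 0"
    show "is_star V E \<or>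
          ((\<forall>w\<in>S. card (N w - (L \<union> S)) = 1) \<and>
           (\<forall>x\<in>V - (L \<union> S). \<exists>w\<in>S. w \<in> N x) \<and>
           (\<forall>w\<in>S. even (card (LA w))))"
    proof (cases "\<exists>w\<in>S. card (N w - L) = 0")
      case True
      then obtain w where w: "w \<in> S" "card (N w - L) = 0" by blast
      have wV: "w \<in> V" using w S_sub by blast
      have GG: "N w \<subseteq> L" "V = insert w (N w)" using G[OF w] by blast+
      have "E = {{w, v} | v. v \<in> V - {w}}"
      proof
        show "E \<subseteq> {{w, v} | v. v \<in> V - {w}}"
        proof
          fix e assume eE: "e \<in> E"
          then obtain a b where ab: "e = {a, b}" "a \<noteq> b" "a \<in> V" "b \<in> V" using edge by blast
          show "e \<in> {{w, v} | v. v \<in> V - {w}}"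
          proof (cases "a = w \<or> b = w")
            case True
            then show ?thesis using ab by (auto simp: insert_commute)
          next
            case False
            then have aN: "a \<in> N w" using ab GG by blast
            have "b \<in> N a" using ab eE unfolding nbhd_def by (simp add: insert_commute)
            moreover have "N a = {w}" using leaf_nb aN GG nb_sym wV by blast
            ultimately show ?thesis using False by blast
          qed
        qed
        show "{{w, v} | v. v \<in> V - {w}} \<subseteq> E"
        proof
          fix e assume "e \<in> {{w, v} | v. v \<in> V - {w}}"
          then obtain v where v: "e = {w, v}" "v \<in> V - {w}" by blast
          then have "v \<in> N w" using GG by blast
          then show "e \<in> E" using v unfolding nbhd_def by (simp add: insert_commute)
        qed
      qed
      then have "is_star V E" unfolding is_star_def using wV by blast
      then show ?thesis by blast
    next
      case False
      then have d1: "\<forall>w\<in>S. card (N w - L) = 1" using dle by force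
      have NS: "N w \<inter> S = {}" if w: "w \<in> S" for w
        using all0 w fin_nb unfolding deg_support_subgraph_def by simp
      have c1: "\<forall>w\<in>S. card (N w - (L \<union> S)) = 1"
      proof
        fix w assume w: "w \<in> S"
        have "N w - (L \<union> S) = N w - L" using NS[OF w] by blast
        then show "card (N w - (L \<union> S)) = 1" using d1 w by simp
      qed
      have c3: "\<forall>w\<in>S. even (card (LA w))" using d1 dev by blast
      have c2: "\<forall>x\<in>V - (L \<union> S). \<exists>w\<in>S. w \<in> N x"
      proof (rule ccontr)
        assume "\<not> (\<forall>x\<in>V - (L \<union> S). \<exists>w\<in>S. w \<in> N x)"
        then obtain x where x: "x \<in> V" "x \<notin> L" "x \<notin> S" "\<forall>w\<in>S. w \<notin> N x" by blast
        have xP: "x \<notin> P0" using P0(3) x by blast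
        let ?P1 = "insert x P0"
        have "valid V E ?P1"
          unfolding valid_def
        proof (intro conjI ballI)
          show "?P1 \<subseteq> V" using x P0(1) unfolding valid_def by blast
        next
          fix v assume v: "v \<in> V"
          show "2 * card (N v \<inter> ?P1) \<le> card (N v)"
          proof (cases "x \<in> N v")
            case True
            have vNx: "v \<in> N x" using nb_sym True v by blast
            have vS: "v \<notin> S" using x vNx by blast
            have vL: "v \<notin> L"
            proof
              assume "v \<in> L"
              then have "x \<in> S" using vNx x unfolding supports_def by blast
              then show False using x by blast
            qed
            have "N v \<inter> P0 = {}" using P0(4) v vS by blast
            then have e1: "N v \<inter> ?P1 = {x}" using True by blast
            have "card (N v) \<noteq> 1" using vL v unfolding leaves_def by blast
            moreover have "card (N v) \<noteq> 0" using True fin_nb by (metis card_0_eq empty_iff)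
            ultimately show ?thesis using e1 by simp
          next
            case False
            then have "N v \<inter> ?P1 = N v \<inter> P0" by blast
            then show ?thesis using P0(1) v unfolding valid_def by simp
          qed
        qed
        moreover have "card ?P1 = M + 1"
        proof -
          have "finite P0" using finV P0(1) finite_subset unfolding valid_def by blast
          then show ?thesis using card_insert_disjoint xP P0(2) by simp
        qed
        ultimately show False using hmax using hmax[rule_format, of ?P1] by simp
      qed
      show ?thesis using c1 c2 c3 by blast
    qed
  qed
  show ?thesis unfolding in_Omega_def using a b b1 b2 by blast
qed

end

theorem theorem4p3:
  fixes V :: "'a set" and E :: "'a set set"
  assumes "is_tree V E" and "card V \<ge> 2"
  shows "inv_signed_total_dom_num V E \<ge>
           - int (card V) + 2 * (\<Sum>w\<in>supports V E. int (card (leaves_at V E w) div 2)) \<and>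
         (inv_signed_total_dom_num V E =
           - int (card V) + 2 * (\<Sum>w\<in>supports V E. int (card (leaves_at V E w) div 2))
         \<longleftrightarrow> in_Omega V E)"
proof -
  have sg: "simple_graph V E" and cn: "graph_connected V E" using assms(1) unfolding is_tree_def by blast+
  interpret ctree V E by unfold_locales (rule sg, rule cn)
  have Mint: "(\<Sum>w\<in>supports V E. int (card (leaves_at V E w) div 2)) = int M"
    unfolding M_def by (simp add: of_nat_sum)
  have low: "- int (card V) + 2 * int M \<le> inv_signed_total_dom_num V E" using lower by simp
  have eq: "inv_signed_total_dom_num V E = - int (card V) + 2 * int M \<longleftrightarrow> in_Omega V E"
  proof
    assume h: "inv_signed_total_dom_num V E = - int (card V) + 2 * int M"
    have "\<forall>P. valid V E P \<longrightarrow> card P \<le> M"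
    proof (intro allI impI)
      fix P assume "valid V E P"
      then have "2 * int (card P) - int (card V) \<le> inv_signed_total_dom_num V E" by (rule gamma_ge)
      then show "card P \<le> M" using h by simp
    qed
    then show "in_Omega V E" by (rule down)
  next
    assume om: "in_Omega V E"
    obtain P where P: "valid V E P" "inv_signed_total_dom_num V E = 2 * int (card P) - int (card V)"
      using gamma_ex by blast
    have "card P \<le> M" using up[OF assms(2) om P(1)] .
    then show "inv_signed_total_dom_num V E = - int (card V) + 2 * int M" using P(2) low by simp
  qed
  show ?thesis unfolding Mint using low eq by blast
qed

end
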